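(* With an even number of agents $n=2p$, the modified RC mechanism subgame perfect implements the majority correspondence $Maj$ in the following sense: for every preference profile $R$ with $|Maj(R)|=1$, every subgame-perfect equilibrium yields $Maj(R)$ and some subgame-perfect equilibrium yields $Maj(R)$; and for every $R$ with $Maj(R)=\{a,b\}$, a subgame-perfect equilibrium exists, any lottery over $A$ being an admissible equilibrium outcome.
   Context: Agents $I=\{1,\dots,n\}$, $n=2p$, options $A=\{a,b\}$, strict preferences, complete information; lotteries compared by stochastic dominance (an agent preferring $x$ weakly (strictly) prefers $\beta$ to $\eta$ iff $\beta(x)\ge\eta(x)$ ($>$)). Majority correspondence: $Maj(R)=a$ if at least $p+1$ agents prefer $a$, $Maj(R)=b$ if at least $p+1$ agents prefer $b$, and $Maj(R)=\{a,b\}$ otherwise. Modified RC mechanism: Voting stage: each agent simultaneously votes $v_i\in A$; the profile $v$ is publicly announced. If $a$ and $b$ receive equally many votes, the outcome is the lottery giving probability $1/2$ to each option. Otherwise the option with more votes is the Voting-stage winner, and in the Confirmation stage $p+1$ agents are drawn uniformly at random and ordered uniformly, $\pi_1,\dots,\pi_{p+1}$; sequentially, as long as nobody has announced $Y$, agent $\pi_t$ announces $Y$ or $N$. If some agent announces $Y$ the outcome is the Voting-stage winner; if all announce $N$ the outcome is the lottery $\beta(v)$ with $\beta_a(v)=|\{i:v_i=a\}|/n$, $\beta_b(v)=1-\beta_a(v)$. *)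

theory Defs
  imports Complex_Main
begin

text \<open>Two options; an agent's strict preference over {a,b} is given by its top option.\<close>
datatype opt = OptA | OptB

text \<open>Agents are 1..n with n = 2p. A preference profile R maps each agent to its
  preferred option. A lottery is a function opt => real (probabilities).\<close>
type_synonym profile = "nat \<Rightarrow> opt"
type_synonym lottery = "opt \<Rightarrow> real"

definition agents :: "nat \<Rightarrow> nat set" where
  "agents p = {1..2*p}"

definition is_lottery :: "lottery \<Rightarrow> bool" where
  "is_lottery L \<longleftrightarrow> (\<forall>x. L x \<ge> 0) \<and> L OptA + L OptB = 1"

definition dlot :: "opt \<Rightarrow> lottery" where
  "dlot x = (\<lambda>y. if y = x then 1 else 0)"

definition half_lot :: lottery where
  "half_lot = (\<lambda>_. 1/2)"

text \<open>Stochastic dominance comparison: agent i (top option R i) strictly prefers L to M.\<close>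
definition strict_pref :: "profile \<Rightarrow> nat \<Rightarrow> lottery \<Rightarrow> lottery \<Rightarrow> bool" where
  "strict_pref R i L M \<longleftrightarrow> L (R i) > M (R i)"

definition count_pref :: "nat \<Rightarrow> (nat \<Rightarrow> opt) \<Rightarrow> opt \<Rightarrow> nat" where
  "count_pref p f x = card {i \<in> agents p. f i = x}"

definition Maj :: "nat \<Rightarrow> profile \<Rightarrow> opt set" where
  "Maj p R = (if count_pref p R OptA \<ge> p + 1 then {OptA}
              else if count_pref p R OptB \<ge> p + 1 then {OptB}
              else {OptA, OptB})"

definition tie :: "nat \<Rightarrow> (nat \<Rightarrow> opt) \<Rightarrow> bool" where
  "tie p v \<longleftrightarrow> count_pref p v OptA = count_pref p v OptB"

definition vwinner :: "nat \<Rightarrow> (nat \<Rightarrow> opt) \<Rightarrow> opt" where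
  "vwinner p v = (if count_pref p v OptA > count_pref p v OptB then OptA else OptB)"

definition beta :: "nat \<Rightarrow> (nat \<Rightarrow> opt) \<Rightarrow> lottery" where
  "beta p v = (\<lambda>x. real (count_pref p v x) / real (2*p))"

text \<open>Confirmation stage: orderings of p+1 distinct agents (drawn uniformly).\<close>
definition Ords :: "nat \<Rightarrow> nat list set" where
  "Ords p = {\<pi>. distinct \<pi> \<and> set \<pi> \<subseteq> agents p \<and> length \<pi> = p + 1}"

text \<open>Confirmation strategies: conf i v \<pi> t = True means that agent i, when it is its
  turn at position t (0-based) of the drawn ordering \<pi> after the (public) vote profile v
  and all earlier drawn agents announced N, announces Y.\<close>
type_synonym cstrat = "nat \<Rightarrow> (nat \<Rightarrow> opt) \<Rightarrow> nat list \<Rightarrow> nat \<Rightarrow> bool"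

text \<open>Outcome of the subgame starting at the decision node (v, \<pi>, t).\<close>
definition conf_outcome :: "nat \<Rightarrow> cstrat \<Rightarrow> (nat \<Rightarrow> opt) \<Rightarrow> nat list \<Rightarrow> nat \<Rightarrow> lottery" where
  "conf_outcome p conf v \<pi> t =
     (if \<exists>s. t \<le> s \<and> s < length \<pi> \<and> conf (\<pi> ! s) v \<pi> s then dlot (vwinner p v) else beta p v)"

text \<open>Outcome of the subgame starting at the chance node after the (non-tied) vote v.\<close>
definition chance_outcome :: "nat \<Rightarrow> cstrat \<Rightarrow> (nat \<Rightarrow> opt) \<Rightarrow> lottery" where
  "chance_outcome p conf v =
     (\<lambda>x. (\<Sum>\<pi>\<in>Ords p. conf_outcome p conf v \<pi> 0 x) / real (card (Ords p)))"

definition outcome :: "nat \<Rightarrow> (nat \<Rightarrow> opt) \<Rightarrow> cstrat \<Rightarrow> lottery" where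
  "outcome p vote conf = (if tie p vote then half_lot else chance_outcome p conf vote)"

text \<open>Subgame-perfect equilibrium (pure strategies): no agent has a profitable
  unilateral deviation in any subgame (the whole game, every chance node after a
  non-tied vote, every decision node of the confirmation stage).\<close>
definition SPE :: "nat \<Rightarrow> profile \<Rightarrow> (nat \<Rightarrow> opt) \<Rightarrow> cstrat \<Rightarrow> bool" where
  "SPE p R vote conf \<longleftrightarrow>
     (\<forall>i\<in>agents p. \<forall>x c.
        \<not> strict_pref R i (outcome p (vote(i := x)) (conf(i := c))) (outcome p vote conf)) \<and>
     (\<forall>v. \<not> tie p v \<longrightarrow> (\<forall>i\<in>agents p. \<forall>c.
        \<not> strict_pref R i (chance_outcome p (conf(i := c)) v) (chance_outcome p conf v))) \<and>
     (\<forall>v \<pi> t. \<not> tie p v \<longrightarrow> \<pi> \<in> Ords p \<longrightarrow> t < length \<pi> \<longrightarrow> (\<forall>i\<in>agents p. \<forall>c.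
        \<not> strict_pref R i (conf_outcome p (conf(i := c)) v \<pi> t) (conf_outcome p conf v \<pi> t)))"

end

theory Submission
  imports Defs
begin

fun oth :: "opt \<Rightarrow> opt" where "oth OptA = OptB" | "oth OptB = OptA"

lemma oth_neq[simp]: "oth x \<noteq> x" by (cases x) auto
lemma oth_neq2[simp]: "x \<noteq> oth x" by (cases x) auto
lemma neq_oth: "y \<noteq> x \<Longrightarrow> y = oth x" by (cases x; cases y) auto
lemma oth_oth[simp]: "oth (oth x) = x" by (cases x) auto

lemma finite_agents[simp]: "finite (agents p)" by (simp add: agents_def)
lemma card_agents: "card (agents p) = 2*p" by (simp add: agents_def)

lemma count_sum: "count_pref p f x + count_pref p f (oth x) = 2*p"
proof -
  let ?A = "{i \<in> agents p. f i = x}" and ?B = "{i \<in> agents p. f i = oth x}"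
  have "agents p = ?A \<union> ?B" using neq_oth by auto
  hence "card (agents p) = card (?A \<union> ?B)" by simp
  also have "\<dots> = card ?A + card ?B" by (rule card_Un_disjoint) auto
  finally show ?thesis unfolding count_pref_def card_agents by simp
qed

lemma count_le: "count_pref p f x \<le> 2*p"
  using count_sum[of p f x] by linarith

lemma tie_iff: "tie p v \<longleftrightarrow> count_pref p v x = p"
  using count_sum[of p v x] count_sum[of p v OptA] unfolding tie_def
  by (cases x) auto

lemma vwinner_iff: "\<not> tie p v \<Longrightarrow> vwinner p v = x \<longleftrightarrow> count_pref p v x > p"
  using count_sum[of p v OptA] unfolding tie_def vwinner_def
  by (cases x) auto

lemma count_upd: "i \<in> agents p \<Longrightarrow> f i \<noteq> x \<Longrightarrow> count_pref p (f(i:=x)) x = count_pref p f x + 1"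
proof -
  assume i: "i \<in> agents p" and fi: "f i \<noteq> x"
  have "{j \<in> agents p. (f(i:=x)) j = x} = insert i {j \<in> agents p. f j = x}" using i by auto
  thus ?thesis unfolding count_pref_def using fi by simp
qed

lemma beta_nonneg: "beta p v x \<ge> 0" by (simp add: beta_def)
lemma beta_le1: "beta p v x \<le> 1"
  using count_le[of p v x] by (cases "p = 0") (auto simp: beta_def divide_le_eq_1)

lemma beta_one: "p \<ge> 1 \<Longrightarrow> beta p v w = 1 \<Longrightarrow> beta p v = dlot w"
proof -
  assume p: "p \<ge> 1" and b: "beta p v w = 1"
  hence "count_pref p v w = 2*p" by (simp add: beta_def)
  hence "count_pref p v (oth w) = 0" using count_sum[of p v w] by simp
  thus ?thesis using b by (auto simp: beta_def dlot_def intro!: ext dest: neq_oth)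
qed

lemma dlot_le1: "dlot w x \<le> 1" and dlot_ge0: "dlot w x \<ge> 0" by (auto simp: dlot_def)

lemma conf_cases: "conf_outcome p conf v \<pi> t = dlot (vwinner p v) \<or> conf_outcome p conf v \<pi> t = beta p v"
  by (simp add: conf_outcome_def)

lemma conf_le1: "conf_outcome p conf v \<pi> t x \<le> 1"
  using conf_cases[of p conf v \<pi> t] dlot_le1 beta_le1 by metis
lemma conf_ge0: "conf_outcome p conf v \<pi> t x \<ge> 0"
  using conf_cases[of p conf v \<pi> t] dlot_ge0 beta_nonneg by metis

lemma finite_Ords: "finite (Ords p)"
proof -
  have "Ords p \<subseteq> {xs. set xs \<subseteq> agents p \<and> length xs = p + 1}" by (auto simp: Ords_def)
  thus ?thesis using finite_lists_length_eq[OF finite_agents] by (rule finite_subset)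
qed

lemma Ords_ne: "p \<ge> 1 \<Longrightarrow> [1..<p+2] \<in> Ords p"
  by (auto simp: Ords_def agents_def)

lemma card_Ords: "p \<ge> 1 \<Longrightarrow> card (Ords p) > 0"
  using Ords_ne finite_Ords card_gt_0_iff by blast

lemma chance_const:
  assumes "\<forall>\<pi>\<in>Ords p. conf_outcome p conf v \<pi> 0 = L" and "p \<ge> 1"
  shows "chance_outcome p conf v = L"
proof
  fix x
  have "(\<Sum>\<pi>\<in>Ords p. conf_outcome p conf v \<pi> 0 x) = (\<Sum>\<pi>\<in>Ords p. L x)"
    using assms(1) by simp
  thus "chance_outcome p conf v x = L x" unfolding chance_outcome_def
    using card_Ords[OF assms(2)] by simp
qed

lemma chance_le:
  assumes "\<forall>\<pi>\<in>Ords p. conf_outcome p conf v \<pi> 0 x \<le> conf_outcome p conf' v' \<pi> 0 y"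
  shows "chance_outcome p conf v x \<le> chance_outcome p conf' v' y"
  unfolding chance_outcome_def
  by (intro divide_right_mono sum_mono) (use assms in auto)

lemma chance_le_const:
  assumes "\<forall>\<pi>\<in>Ords p. conf_outcome p conf v \<pi> 0 x \<le> b" "p \<ge> 1"
  shows "chance_outcome p conf v x \<le> b"
proof -
  have "(\<Sum>\<pi>\<in>Ords p. conf_outcome p conf v \<pi> 0 x) \<le> (\<Sum>\<pi>\<in>Ords p. b)"
    by (rule sum_mono) (use assms in auto)
  thus ?thesis unfolding chance_outcome_def using card_Ords[OF assms(2)]
    by (simp add: divide_le_eq mult.commute)
qed

lemma chance_le1: "chance_outcome p conf v x \<le> 1"
proof (cases "p = 0")
  case True
  hence "Ords p = {}" by (auto simp: Ords_def agents_def)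
  thus ?thesis by (simp add: chance_outcome_def)
next
  case False
  thus ?thesis by (intro chance_le_const) (auto intro: conf_le1)
qed

lemma cover:
  assumes "count_pref p R w \<ge> p" "\<pi> \<in> Ords p"
  shows "\<exists>j\<in>set \<pi>. R j = w"
proof (rule ccontr)
  assume "\<not> ?thesis"
  hence "set \<pi> \<subseteq> {i \<in> agents p. R i = oth w}" using assms(2) neq_oth by (auto simp: Ords_def)
  hence "card (set \<pi>) \<le> count_pref p R (oth w)" unfolding count_pref_def
    by (intro card_mono) auto
  moreover have "card (set \<pi>) = p + 1" using assms(2) by (auto simp: Ords_def distinct_card)
  moreover note count_sum[of p R w] assms(1)
  ultimately show False by linarith
qed

lemma allw:
  assumes "count_pref p R w \<ge> p + 1"
  shows "\<exists>\<pi>\<in>Ords p. \<forall>j\<in>set \<pi>. R j = w"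
proof -
  obtain T where T: "T \<subseteq> {i \<in> agents p. R i = w}" "card T = p + 1" "finite T"
    using obtain_subset_with_card_n[OF assms[unfolded count_pref_def]] by blast
  let ?\<pi> = "sorted_list_of_set T"
  have "?\<pi> \<in> Ords p" using T by (auto simp: Ords_def)
  moreover have "\<forall>j\<in>set ?\<pi>. R j = w" using T by auto
  ultimately show ?thesis by blast
qed

definition C3 :: "nat \<Rightarrow> profile \<Rightarrow> cstrat \<Rightarrow> bool" where
  "C3 p R conf \<longleftrightarrow> (\<forall>v \<pi> t. \<not> tie p v \<longrightarrow> \<pi> \<in> Ords p \<longrightarrow> t < length \<pi> \<longrightarrow> (\<forall>i\<in>agents p. \<forall>c.
        \<not> strict_pref R i (conf_outcome p (conf(i := c)) v \<pi> t) (conf_outcome p conf v \<pi> t)))"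

lemma L1:
  assumes C: "C3 p R conf" and nt: "\<not> tie p v" and pi: "\<pi> \<in> Ords p"
    and j: "j \<in> set \<pi>" and Rj: "R j = vwinner p v" and p: "p \<ge> 1"
  shows "conf_outcome p conf v \<pi> 0 = dlot (vwinner p v)"
proof (rule ccontr)
  let ?w = "vwinner p v"
  assume ne: "conf_outcome p conf v \<pi> 0 \<noteq> dlot ?w"
  hence noY: "\<not> (\<exists>s. s < length \<pi> \<and> conf (\<pi> ! s) v \<pi> s)"
    unfolding conf_outcome_def by (auto split: if_splits)
  hence co0: "conf_outcome p conf v \<pi> 0 = beta p v" unfolding conf_outcome_def by (intro if_not_P) auto
  hence "beta p v \<noteq> dlot ?w" using ne by simp
  hence blt: "beta p v ?w < 1" using beta_one[OF p] beta_le1[of p v ?w] by fastforce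
  obtain s where s: "s < length \<pi>" "\<pi> ! s = j" using j by (auto simp: in_set_conv_nth)
  have ja: "j \<in> agents p" using j pi by (auto simp: Ords_def)
  let ?c = "\<lambda>_ _ _. True"
  have "conf_outcome p (conf(j := ?c)) v \<pi> s = dlot ?w"
    using s by (auto simp: conf_outcome_def)
  moreover have "conf_outcome p conf v \<pi> s = beta p v"
    using noY by (auto simp: conf_outcome_def)
  ultimately have "strict_pref R j (conf_outcome p (conf(j := ?c)) v \<pi> s) (conf_outcome p conf v \<pi> s)"
    using blt Rj by (simp add: strict_pref_def dlot_def)
  thus False using C nt pi s ja unfolding C3_def by blast
qed

lemma L2:
  assumes C: "C3 p R conf" and nt: "\<not> tie p v" and pi: "\<pi> \<in> Ords p"
    and noW: "\<forall>j\<in>set \<pi>. R j \<noteq> vwinner p v"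
    and pos: "beta p v (oth (vwinner p v)) > 0"
  shows "conf_outcome p conf v \<pi> 0 = beta p v"
proof (rule ccontr)
  let ?w = "vwinner p v"
  let ?S = "{s. s < length \<pi> \<and> conf (\<pi> ! s) v \<pi> s}"
  assume "conf_outcome p conf v \<pi> 0 \<noteq> beta p v"
  hence ne: "?S \<noteq> {}" by (auto simp: conf_outcome_def split: if_splits)
  have fin: "finite ?S" by simp
  define m where "m = Max ?S"
  have mS: "m \<in> ?S" using Max_in[OF fin ne] m_def by simp
  have mmax: "\<And>s. s \<in> ?S \<Longrightarrow> s \<le> m" using Max_ge[OF fin] m_def by simp
  define j where "j = \<pi> ! m"
  have jset: "j \<in> set \<pi>" using mS j_def by auto
  have ja: "j \<in> agents p" using jset pi by (auto simp: Ords_def)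
  have Rj: "R j = oth ?w" using noW jset neq_oth by blast
  have dist: "distinct \<pi>" using pi by (simp add: Ords_def)
  let ?c = "\<lambda>_ _ _. False"
  have "\<not> (\<exists>s. m \<le> s \<and> s < length \<pi> \<and> (conf(j := ?c)) (\<pi> ! s) v \<pi> s)"
  proof
    assume "\<exists>s. m \<le> s \<and> s < length \<pi> \<and> (conf(j := ?c)) (\<pi> ! s) v \<pi> s"
    then obtain s where s: "m \<le> s" "s < length \<pi>" "(conf(j := ?c)) (\<pi> ! s) v \<pi> s" by blast
    show False
    proof (cases "s = m")
      case True thus False using s j_def by simp
    next
      case False
      hence "\<pi> ! s \<noteq> j" using j_def dist s mS nth_eq_iff_index_eq by fastforce
      hence "s \<in> ?S" using s by simp
      thus False using mmax False s by fastforce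
    qed
  qed
  hence "conf_outcome p (conf(j := ?c)) v \<pi> m = beta p v" unfolding conf_outcome_def by (rule if_not_P)
  moreover have "conf_outcome p conf v \<pi> m = dlot ?w" using mS by (auto simp: conf_outcome_def)
  ultimately have "strict_pref R j (conf_outcome p (conf(j := ?c)) v \<pi> m) (conf_outcome p conf v \<pi> m)"
    using pos Rj by (simp add: strict_pref_def dlot_def)
  thus False using C nt pi mS ja unfolding C3_def by blast
qed

definition conf0 :: "nat \<Rightarrow> profile \<Rightarrow> cstrat" where
  "conf0 p R = (\<lambda>i v \<pi> s. R i = vwinner p v)"

lemma conf0_pt:
  "conf_outcome p ((conf0 p R)(i := c)) v \<pi> t (R i) \<le> conf_outcome p (conf0 p R) v \<pi> t (R i)"
proof -
  let ?w = "vwinner p v"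
  let ?E = "\<exists>s. t \<le> s \<and> s < length \<pi> \<and> R (\<pi> ! s) = ?w"
  have rhs: "conf_outcome p (conf0 p R) v \<pi> t = (if ?E then dlot ?w else beta p v)"
    by (simp add: conf_outcome_def conf0_def)
  show ?thesis
  proof (cases ?E)
    case E: True
    show ?thesis
    proof (cases "R i = ?w")
      case True thus ?thesis using E rhs conf_le1 by (simp add: dlot_def)
    next
      case False
      from E obtain s where s: "t \<le> s" "s < length \<pi>" "R (\<pi> ! s) = ?w" by blast
      hence "\<pi> ! s \<noteq> i" using False by auto
      hence "conf_outcome p ((conf0 p R)(i := c)) v \<pi> t = dlot ?w"
        using s unfolding conf_outcome_def by (intro if_P) (auto simp: conf0_def)
      thus ?thesis using E rhs by simp
    qed
  next
    case nE: False
    show ?thesis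
    proof (cases "R i = ?w")
      case True
      have "\<not> (\<exists>s. t \<le> s \<and> s < length \<pi> \<and> ((conf0 p R)(i := c)) (\<pi> ! s) v \<pi> s)"
      proof
        assume "\<exists>s. t \<le> s \<and> s < length \<pi> \<and> ((conf0 p R)(i := c)) (\<pi> ! s) v \<pi> s"
        then obtain s where s: "t \<le> s" "s < length \<pi>" "((conf0 p R)(i := c)) (\<pi> ! s) v \<pi> s" by blast
        show False
        proof (cases "\<pi> ! s = i")
          case True thus False using nE s \<open>R i = ?w\<close> by blast
        next
          case False thus False using nE s by (auto simp: conf0_def)
        qed
      qed
      hence "conf_outcome p ((conf0 p R)(i := c)) v \<pi> t = beta p v"
        unfolding conf_outcome_def by (rule if_not_P)
      thus ?thesis unfolding rhs if_not_P[OF nE] by simp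
    next
      case False
      have "dlot ?w (R i) \<le> beta p v (R i)" using False beta_nonneg by (simp add: dlot_def)
      thus ?thesis using nE rhs conf_cases[of p "(conf0 p R)(i := c)" v \<pi> t] by auto
    qed
  qed
qed

lemma C3_conf0: "C3 p R (conf0 p R)"
  unfolding C3_def strict_pref_def using conf0_pt by (simp add: not_less)

lemma C2_conf0: "chance_outcome p ((conf0 p R)(i := c)) v (R i) \<le> chance_outcome p (conf0 p R) v (R i)"
  by (rule chance_le) (simp add: conf0_pt)

lemma chance_conf0:
  assumes "\<not> tie p v" "count_pref p R (vwinner p v) \<ge> p" "p \<ge> 1"
  shows "chance_outcome p (conf0 p R) v = dlot (vwinner p v)"
proof (rule chance_const[OF _ assms(3)], intro ballI)
  fix \<pi> assume pi: "\<pi> \<in> Ords p"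
  obtain j where j: "j \<in> set \<pi>" "R j = vwinner p v" using cover[OF assms(2) pi] by blast
  obtain s where s: "s < length \<pi>" "\<pi> ! s = j" using j by (auto simp: in_set_conv_nth)
  show "conf_outcome p (conf0 p R) v \<pi> 0 = dlot (vwinner p v)"
    unfolding conf_outcome_def using s j by (intro if_P) (auto simp: conf0_def)
qed

lemma SPE_R:
  assumes C1: "\<forall>i\<in>agents p. \<forall>x c.
        \<not> strict_pref R i (outcome p (R(i := x)) ((conf0 p R)(i := c))) (outcome p R (conf0 p R))"
  shows "SPE p R R (conf0 p R)"
  unfolding SPE_def using C1 C3_conf0[of p R] C2_conf0[of p R]
  by (auto simp: C3_def strict_pref_def not_less)

lemma outcome_le1: "outcome p v conf x \<le> 1"
  using chance_le1 by (auto simp: outcome_def half_lot_def)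

lemma dev:
  assumes i: "i \<in> agents p" and Ri: "R i \<noteq> x" and cnt: "count_pref p R x \<ge> p" and p: "p \<ge> 1"
  shows "outcome p (R(i := x)) ((conf0 p R)(i := c)) (R i) \<le> 0"
proof -
  let ?v = "R(i := x)"
  have cv: "count_pref p ?v x = count_pref p R x + 1" using count_upd[of i p R x] i Ri by simp
  have nt: "\<not> tie p ?v" using cv cnt tie_iff[of p ?v x] by simp
  have vw: "vwinner p ?v = x" using vwinner_iff[OF nt] cv cnt by simp
  have "outcome p ?v ((conf0 p R)(i := c)) (R i) = chance_outcome p ((conf0 p R)(i := c)) ?v (R i)"
    using nt by (simp add: outcome_def)
  also have "\<dots> \<le> chance_outcome p (conf0 p R) ?v (R i)" by (rule C2_conf0)
  also have "\<dots> = dlot x (R i)" using chance_conf0[of p ?v R] nt vw cnt p by simp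
  also have "\<dots> = 0" using Ri by (simp add: dlot_def)
  finally show ?thesis .
qed

lemma exist_single:
  assumes cnt: "count_pref p R w \<ge> p + 1"
  shows "SPE p R R (conf0 p R) \<and> outcome p R (conf0 p R) = dlot w"
proof -
  have p: "p \<ge> 1" using cnt count_le[of p R w] by linarith
  have nt: "\<not> tie p R" using cnt tie_iff[of p R w] by simp
  have vw: "vwinner p R = w" using vwinner_iff[OF nt] cnt by simp
  have out: "outcome p R (conf0 p R) = dlot w"
    using chance_conf0[of p R R] nt vw cnt p by (simp add: outcome_def)
  have "SPE p R R (conf0 p R)"
  proof (rule SPE_R, intro ballI allI)
    fix i x c assume i: "i \<in> agents p"
    show "\<not> strict_pref R i (outcome p (R(i := x)) ((conf0 p R)(i := c))) (outcome p R (conf0 p R))"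
    proof (cases "x = R i")
      case True
      have "outcome p (R(i := x)) ((conf0 p R)(i := c)) (R i) = chance_outcome p ((conf0 p R)(i := c)) R (R i)"
        using True nt by (simp add: outcome_def)
      also have "\<dots> \<le> chance_outcome p (conf0 p R) R (R i)" by (rule C2_conf0)
      also have "\<dots> = outcome p R (conf0 p R) (R i)" using nt by (simp add: outcome_def)
      finally show ?thesis by (simp add: strict_pref_def not_less)
    next
      case xne: False
      show ?thesis
      proof (cases "R i = w")
        case True thus ?thesis using out outcome_le1 by (simp add: strict_pref_def dlot_def not_less)
      next
        case False
        hence "x = w" using xne neq_oth by (metis oth_oth)
        hence "outcome p (R(i := x)) ((conf0 p R)(i := c)) (R i) \<le> 0"
          using dev[of i p R x c] i False cnt p by simp
        thus ?thesis using out False by (simp add: strict_pref_def dlot_def not_less)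
      qed
    qed
  qed
  thus ?thesis using out by simp
qed

lemma exist_tie:
  assumes m: "Maj p R = {OptA, OptB}"
  shows "SPE p R R (conf0 p R) \<and> is_lottery (outcome p R (conf0 p R))"
proof -
  have "\<not> count_pref p R OptA \<ge> p + 1" "\<not> count_pref p R OptB \<ge> p + 1"
    using m by (auto simp: Maj_def split: if_splits)
  hence cA: "count_pref p R OptA = p" and cB: "count_pref p R OptB = p"
    using count_sum[of p R OptA] by auto
  have cx: "count_pref p R x = p" for x using cA cB by (cases x) auto
  have t: "tie p R" using cA by (simp add: tie_iff[of p R OptA])
  have out: "outcome p R (conf0 p R) = half_lot" using t by (simp add: outcome_def)
  have "SPE p R R (conf0 p R)"
  proof (rule SPE_R, intro ballI allI)
    fix i x c assume i: "i \<in> agents p"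
    hence p: "p \<ge> 1" by (auto simp: agents_def)
    show "\<not> strict_pref R i (outcome p (R(i := x)) ((conf0 p R)(i := c))) (outcome p R (conf0 p R))"
    proof (cases "x = R i")
      case True thus ?thesis using t by (simp add: outcome_def strict_pref_def)
    next
      case False
      hence "outcome p (R(i := x)) ((conf0 p R)(i := c)) (R i) \<le> 0"
        using dev[OF i _ _ p] cx by simp
      thus ?thesis using out by (simp add: strict_pref_def half_lot_def)
    qed
  qed
  moreover have "is_lottery (outcome p R (conf0 p R))" using out by (simp add: is_lottery_def half_lot_def)
  ultimately show ?thesis by simp
qed

lemma exists_dev:
  assumes "count_pref p f x > count_pref p g x"
  shows "\<exists>i\<in>agents p. f i = x \<and> g i \<noteq> x"
proof (rule ccontr)
  assume "\<not> ?thesis"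
  hence "{i \<in> agents p. f i = x} \<subseteq> {i \<in> agents p. g i = x}" by auto
  hence "count_pref p f x \<le> count_pref p g x" unfolding count_pref_def by (intro card_mono) auto
  thus False using assms by simp
qed

lemma spe_unique:
  assumes cnt: "count_pref p R w \<ge> p + 1" and S: "SPE p R vote conf"
  shows "outcome p vote conf = dlot w"
proof -
  have p: "p \<ge> 1" using cnt count_le[of p R w] by linarith
  have C1: "\<And>i x c. i \<in> agents p \<Longrightarrow>
      \<not> strict_pref R i (outcome p (vote(i := x)) (conf(i := c))) (outcome p vote conf)"
    using S by (simp add: SPE_def)
  have C: "C3 p R conf" using S by (simp add: SPE_def C3_def)
  have W: "chance_outcome p conf v = dlot w" if nt: "\<not> tie p v" and vw: "vwinner p v = w" for v
  proof (rule chance_const[OF _ p], intro ballI)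
    fix \<pi> assume pi: "\<pi> \<in> Ords p"
    obtain j where j: "j \<in> set \<pi>" "R j = w" using cover[of p R w \<pi>] cnt pi by auto
    show "conf_outcome p conf v \<pi> 0 = dlot w" using L1[OF C nt pi j(1) _ p] j vw by simp
  qed
  have cu: "conf(i := conf i) = conf" for i by simp
  show ?thesis
  proof (cases "tie p vote")
    case t: True
    have "count_pref p vote w = p" using t tie_iff by blast
    then obtain i where i: "i \<in> agents p" "R i = w" "vote i \<noteq> w"
      using exists_dev[of p vote w R] cnt by auto
    let ?v = "vote(i := w)"
    have cv: "count_pref p ?v w = p + 1" using count_upd[of i p vote w] i \<open>count_pref p vote w = p\<close> by simp
    have nt: "\<not> tie p ?v" using cv tie_iff[of p ?v w] by simp
    have vw: "vwinner p ?v = w" using vwinner_iff[OF nt] cv by simp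
    have "outcome p ?v (conf(i := conf i)) = dlot w" using W[OF nt vw] nt by (simp add: outcome_def)
    moreover have "outcome p vote conf = half_lot" using t by (simp add: outcome_def)
    ultimately have "strict_pref R i (outcome p ?v (conf(i := conf i))) (outcome p vote conf)"
      using i by (simp add: strict_pref_def dlot_def half_lot_def)
    thus ?thesis using C1 i by blast
  next
    case nt: False
    show ?thesis
    proof (cases "vwinner p vote = w")
      case True thus ?thesis using W[OF nt True] nt by (simp add: outcome_def)
    next
      case False
      let ?u = "oth w"
      have vu: "vwinner p vote = ?u" using False neq_oth by blast
      have cvu: "count_pref p vote ?u > p" using vwinner_iff[OF nt] vu by blast
      have cRu: "count_pref p R ?u \<le> p - 1" using count_sum[of p R w] cnt by simp
      have lt: "count_pref p R ?u < count_pref p vote ?u" using cvu cRu by linarith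
      then obtain i where i: "i \<in> agents p" "vote i = ?u" "R i \<noteq> ?u"
        using exists_dev by blast
      have Ri: "R i = w" using i(3) neq_oth by fastforce
      let ?v = "vote(i := w)"
      have cv: "count_pref p ?v w = count_pref p vote w + 1" using count_upd[of i p vote w] i by simp
      have cvw: "count_pref p vote w < p" using count_sum[of p vote w] cvu by simp
      have bnd: "conf_outcome p conf vote \<pi> 0 w \<le> beta p vote w" for \<pi>
        using conf_cases[of p conf vote \<pi> 0] vu beta_nonneg[of p vote w]
        by (auto simp: dlot_def)
      have obnd: "outcome p vote conf w \<le> beta p vote w"
        using nt chance_le_const[of p conf vote w "beta p vote w"] bnd p by (simp add: outcome_def)
      have "outcome p ?v (conf(i := conf i)) w > outcome p vote conf w"
      proof (cases "tie p ?v")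
        case True
        hence "count_pref p vote w = p - 1" using cv tie_iff[of p ?v w] by simp
        hence "beta p vote w < 1/2" using p by (simp add: beta_def divide_less_eq)
        thus ?thesis using True obnd by (simp add: outcome_def half_lot_def)
      next
        case nt': False
        have vu': "vwinner p ?v = ?u" using vwinner_iff[OF nt', of w] cv cvw neq_oth by auto
        have bl: "beta p vote w < beta p ?v w" using cv p by (simp add: beta_def divide_strict_right_mono)
        have bpos: "beta p ?v w > 0" using cv p by (simp add: beta_def)
        let ?f = "\<lambda>\<pi>. conf_outcome p conf vote \<pi> 0 w"
        let ?g = "\<lambda>\<pi>. conf_outcome p conf ?v \<pi> 0 w"
        have le: "\<forall>\<pi>\<in>Ords p. ?f \<pi> \<le> ?g \<pi>"
        proof
          fix \<pi> assume pi: "\<pi> \<in> Ords p"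
          show "?f \<pi> \<le> ?g \<pi>"
          proof (cases "\<exists>j\<in>set \<pi>. R j = ?u")
            case True
            then obtain j where "j \<in> set \<pi>" "R j = ?u" by blast
            hence "?f \<pi> = 0" using L1[OF C nt pi, of j] vu p by (simp add: dlot_def)
            thus ?thesis using conf_ge0 by simp
          next
            case False
            hence "?g \<pi> = beta p ?v w" using L2[OF C nt' pi] vu' bpos by auto
            thus ?thesis using bnd[of \<pi>] bl by simp
          qed
        qed
        obtain \<pi>0 where pi0: "\<pi>0 \<in> Ords p" "\<forall>j\<in>set \<pi>0. R j = w" using allw[OF cnt] by blast
        have "?g \<pi>0 = beta p ?v w" using L2[OF C nt' pi0(1)] pi0(2) vu' bpos by auto
        hence "?f \<pi>0 < ?g \<pi>0" using bnd[of \<pi>0] bl by simp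
        hence "sum ?f (Ords p) < sum ?g (Ords p)"
          using sum_strict_mono_ex1[OF finite_Ords le] pi0(1) by blast
        hence "chance_outcome p conf vote w < chance_outcome p conf ?v w"
          unfolding chance_outcome_def using card_Ords[OF p] by (simp add: divide_strict_right_mono)
        thus ?thesis using nt nt' by (simp add: outcome_def)
      qed
      hence "strict_pref R i (outcome p ?v (conf(i := conf i))) (outcome p vote conf)"
        using Ri by (simp add: strict_pref_def)
      thus ?thesis using C1 i by blast
    qed
  qed
qed

lemma maj_single:
  assumes "card (Maj p R) = 1"
  shows "\<exists>w. count_pref p R w \<ge> p + 1 \<and> Maj p R = {w}"
  using assms by (auto simp: Maj_def split: if_splits)

theorem claim2:
  fixes p :: nat
  shows "(\<forall>R. card (Maj p R) = 1 \<longrightarrow>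
            (\<forall>vote conf. SPE p R vote conf \<longrightarrow> outcome p vote conf = dlot (the_elem (Maj p R))) \<and>
            (\<exists>vote conf. SPE p R vote conf \<and> outcome p vote conf = dlot (the_elem (Maj p R)))) \<and>
         (\<forall>R. Maj p R = {OptA, OptB} \<longrightarrow>
            (\<exists>vote conf. SPE p R vote conf \<and> is_lottery (outcome p vote conf)))"
proof (rule conjI; intro allI impI)
  fix R assume "card (Maj p R) = 1"
  then obtain w where w: "count_pref p R w \<ge> p + 1" "Maj p R = {w}" using maj_single by blast
  have "\<forall>vote conf. SPE p R vote conf \<longrightarrow> outcome p vote conf = dlot (the_elem (Maj p R))"
    using spe_unique[OF w(1)] w(2) by simp
  moreover have "\<exists>vote conf. SPE p R vote conf \<and> outcome p vote conf = dlot (the_elem (Maj p R))"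
    using exist_single[OF w(1)] w(2) by auto
  ultimately show "(\<forall>vote conf. SPE p R vote conf \<longrightarrow> outcome p vote conf = dlot (the_elem (Maj p R))) \<and>
            (\<exists>vote conf. SPE p R vote conf \<and> outcome p vote conf = dlot (the_elem (Maj p R)))" ..
next
  fix R assume "Maj p R = {OptA, OptB}"
  thus "\<exists>vote conf. SPE p R vote conf \<and> is_lottery (outcome p vote conf)"
    using exist_tie by blast
qed

end
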